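(* Let $N,M,L$ be positive integers and $\sigma^2>0$. Let $\hat\alpha_i,\hat\alpha_j\in\mathbb C$, $\hat{\mathbf G}_i,\hat{\mathbf G}_j\in\mathbb C^{N\times M}$, $\mathbf a_i,\mathbf a_j\in\mathbb C^N$, $\boldsymbol\theta\in\mathbb C^N$ with $|\boldsymbol\theta(n)|=1$ for all $n$, and $\mathbf x\in\mathbb C^M$. Set $\boldsymbol\Theta=\mathrm{diag}(\boldsymbol\theta)$, $\mathbf X=[\mathbf x,\dots,\mathbf x]\in\mathbb C^{M\times L}$, and for $k\in\{i,j\}$ let $\bar{\mathbf y}_k=\mathrm{vec}\big(\hat\alpha_k\hat{\mathbf G}_k^T\boldsymbol\Theta\mathbf a_k\mathbf a_k^T\boldsymbol\Theta\hat{\mathbf G}_k\mathbf X\big)$ and $d=\frac{1}{\sigma^2}\|\bar{\mathbf y}_i-\bar{\mathbf y}_j\|^2$. Define $\mathbf Q=\boldsymbol\theta\boldsymbol\theta^H$ and, for $k,l\in\{i,j\}$, $$\mathbf A_{k,l}=\big(\hat{\mathbf G}_l^{*}\hat{\mathbf G}_k^{T}\big)\odot\big(\mathbf a_k\mathbf a_l^H\big)^T,\qquad \mathbf B_{k,l}=\big(\mathbf a_l^{*}\mathbf a_k^T\big)\odot\big(\hat{\mathbf G}_k\mathbf x\mathbf x^H\hat{\mathbf G}_l^H\big)^T.$$ Then $d=\varphi$, where $$\varphi=\frac{L}{\sigma^2}\Big(|\hat\alpha_i|^2\mathrm{tr}\big(\mathbf Q^H\mathbf A_{i,i}\mathbf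 Q\mathbf B_{i,i}\big)-2\Re\big\{\hat\alpha_i\hat\alpha_j^{*}\mathrm{tr}\big(\mathbf Q^H\mathbf A_{i,j}\mathbf Q\mathbf B_{i,j}\big)\big\}+|\hat\alpha_j|^2\mathrm{tr}\big(\mathbf Q^H\mathbf A_{j,j}\mathbf Q\mathbf B_{j,j}\big)\Big).$$
   Context: $\odot$ is the Hadamard (entrywise) product, $(\cdot)^*$ entrywise complex conjugate, $(\cdot)^T$ transpose, $(\cdot)^H$ conjugate transpose, $\mathrm{vec}$ column-stacking vectorization, $\|\cdot\|$ the Euclidean norm. In the paper $d$ is the (symmetrized relative-entropy) distance between the Gaussian observation models under two target-location hypotheses $i$ and $j$. *)

theory Defs
  imports "HOL-Analysis.Analysis"
begin

text \<open>Matrices are Cartesian-product types: an R x C complex matrix is complex^'c^'r.\<close>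

definition hadamard :: "complex^'c^'r \<Rightarrow> complex^'c^'r \<Rightarrow> complex^'c^'r" where
  "hadamard A B = (\<chi> i j. A$i$j * B$i$j)"

definition mconj :: "complex^'c^'r \<Rightarrow> complex^'c^'r" where
  "mconj A = (\<chi> i j. cnj (A$i$j))"

definition herm :: "complex^'c^'r \<Rightarrow> complex^'r^'c" where
  "herm A = transpose (mconj A)"

definition smat :: "complex \<Rightarrow> complex^'c^'r \<Rightarrow> complex^'c^'r" where
  "smat c A = (\<chi> i j. c * A$i$j)"

definition colm :: "complex^'n \<Rightarrow> complex^1^'n" where
  "colm v = (\<chi> i j. v$i)"

definition diagm :: "complex^'n \<Rightarrow> complex^'n^'n" where
  "diagm v = (\<chi> i j. if i = j then v$i else 0)"

text \<open>Column-stacking vectorization: entry (j,i) (column j, row i), ordered column-major.\<close>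
definition vecm :: "complex^'c^'r \<Rightarrow> complex^('c \<times> 'r)" where
  "vecm A = (\<chi> p. A $ snd p $ fst p)"

end

theory Submission
  imports Defs
begin


definition UU :: "complex^'n \<Rightarrow> complex^'m^'n \<Rightarrow> complex^'n \<Rightarrow> complex^'m" where
  "UU th G a = (\<chi> m. \<Sum>n\<in>UNIV. G$n$m * th$n * a$n)"

definition SS :: "complex^'n \<Rightarrow> complex^'m^'n \<Rightarrow> complex^'n \<Rightarrow> complex^'m \<Rightarrow> complex" where
  "SS th G a x = (\<Sum>m\<in>UNIV. UU th G a $ m * x$m)"

definition qf :: "complex^'n \<Rightarrow> complex^'n^'n \<Rightarrow> complex" where
  "qf th M = (\<Sum>p\<in>UNIV. \<Sum>q\<in>UNIV. cnj (th$p) * M$p$q * th$q)"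

lemma colm_outer: "colm a ** transpose (colm b) = (\<chi> i j. a$i * b$j)"
  by (simp add: matrix_matrix_mult_def colm_def transpose_def vec_eq_iff)

lemma colm_outerH: "colm a ** herm (colm b) = (\<chi> i j. a$i * cnj (b$j))"
  by (simp add: matrix_matrix_mult_def colm_def transpose_def herm_def mconj_def vec_eq_iff)

lemma Y_eq:
  fixes G :: "complex^'m^'n" and X :: "complex^'l^'m"
  assumes "X = (\<chi> r c. x$r)"
  shows "transpose G ** diagm th ** colm a ** transpose (colm a) ** diagm th ** G ** X
     = (\<chi> r c. SS th G a x * UU th G a $ r)"
proof -
  have 1: "transpose G ** diagm th = (\<chi> i j. G$j$i * th$j)"
    by (simp add: matrix_matrix_mult_def transpose_def diagm_def vec_eq_iff if_distrib cong: if_cong)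
  have 2: "(\<chi> i j. G$j$i * th$j) ** colm a = (\<chi> i (k::1). UU th G a $ i)"
    by (simp add: matrix_matrix_mult_def colm_def UU_def vec_eq_iff)
  have 3: "(\<chi> i (k::1). UU th G a $ i) ** transpose (colm a) = (\<chi> i j. UU th G a $ i * a$j)"
    by (simp add: matrix_matrix_mult_def colm_def transpose_def vec_eq_iff)
  have 4: "(\<chi> i j. UU th G a $ i * a$j) ** diagm th = (\<chi> i j. UU th G a $ i * a$j * th$j)"
    by (simp add: matrix_matrix_mult_def diagm_def vec_eq_iff if_distrib cong: if_cong)
  have 5: "(\<chi> i j. UU th G a $ i * a$j * th$j) ** G = (\<chi> i m. UU th G a $ i * (\<Sum>j\<in>UNIV. G$j$m * th$j * a$j))"
    by (simp add: matrix_matrix_mult_def vec_eq_iff sum_distrib_left mult_ac)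
  have 6: "(\<chi> i m. UU th G a $ i * (\<Sum>j\<in>UNIV. G$j$m * th$j * a$j)) ** X = (\<chi> r c. SS th G a x * UU th G a $ r)"
    by (simp add: assms matrix_matrix_mult_def vec_eq_iff SS_def UU_def sum_distrib_left sum_distrib_right mult_ac)
  show ?thesis
    unfolding 1 2 3 4 5 6 by simp
qed


lemma herm_outer: "herm (colm th ** herm (colm th)) = colm th ** herm (colm th)"
  unfolding colm_outerH by (simp add: herm_def mconj_def transpose_def vec_eq_iff mult.commute)

lemma trace_lemma:
  fixes M1 M2 :: "complex^'n^'n"
  shows "trace (herm (colm th ** herm (colm th)) ** M1 ** (colm th ** herm (colm th)) ** M2) = qf th M1 * qf th M2"
proof -
  have a: "(\<chi> i j. th$i * cnj (th$j)) ** M1 = (\<chi> i k. th$i * (\<Sum>j\<in>UNIV. cnj (th$j) * M1$j$k))"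
    by (simp add: matrix_matrix_mult_def vec_eq_iff sum_distrib_left mult_ac)
  have b: "(\<chi> i k. th$i * (\<Sum>j\<in>UNIV. cnj (th$j) * M1$j$k)) ** (\<chi> i j. th$i * cnj (th$j))
      = (\<chi> i l. th$i * qf th M1 * cnj (th$l))"
    apply (simp add: matrix_matrix_mult_def vec_eq_iff qf_def sum_distrib_left sum_distrib_right mult_ac)
    apply (subst sum.swap) apply simp
    done
  have c: "trace ((\<chi> i l. th$i * qf th M1 * cnj (th$l)) ** M2) = qf th M1 * qf th M2"
    apply (simp add: trace_def matrix_matrix_mult_def qf_def sum_distrib_left sum_distrib_right)
    apply (rule trans[OF sum.swap])
    apply (rule sum.cong[OF refl])
    apply (rule sum.cong[OF refl])+
    apply (simp add: mult_ac)
    done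
  show ?thesis unfolding herm_outer unfolding colm_outerH a b c ..
qed

lemma swap3: "(\<Sum>p\<in>A. \<Sum>q\<in>B. \<Sum>m\<in>C. f p q m) = (\<Sum>m\<in>C. \<Sum>p\<in>A. \<Sum>q\<in>B. f p q m)"
proof -
  have "(\<Sum>p\<in>A. \<Sum>q\<in>B. \<Sum>m\<in>C. f p q m) = (\<Sum>p\<in>A. \<Sum>m\<in>C. \<Sum>q\<in>B. f p q m)"
    by (rule sum.cong[OF refl], rule sum.swap)
  also have "\<dots> = (\<Sum>m\<in>C. \<Sum>p\<in>A. \<Sum>q\<in>B. f p q m)" by (rule sum.swap)
  finally show ?thesis .
qed

lemma qA: "qf th (hadamard (mconj Gl ** transpose Gk) (transpose (colm ak ** herm (colm al))))
   = (\<Sum>m\<in>UNIV. cnj (UU th Gl al $ m) * UU th Gk ak $ m)"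
proof -
  have "qf th (hadamard (mconj Gl ** transpose Gk) (transpose (colm ak ** herm (colm al))))
     = (\<Sum>p\<in>UNIV. \<Sum>q\<in>UNIV. \<Sum>m\<in>UNIV. cnj (th$p) * cnj (Gl$p$m) * cnj (al$p) * (Gk$q$m * th$q * ak$q))"
    by (simp add: qf_def hadamard_def colm_def herm_def mconj_def transpose_def matrix_matrix_mult_def
          sum_distrib_left sum_distrib_right mult_ac)
  also have "\<dots> = (\<Sum>m\<in>UNIV. \<Sum>p\<in>UNIV. \<Sum>q\<in>UNIV. cnj (th$p) * cnj (Gl$p$m) * cnj (al$p) * (Gk$q$m * th$q * ak$q))"
    by (rule swap3)
  also have "\<dots> = (\<Sum>m\<in>UNIV. cnj (UU th Gl al $ m) * UU th Gk ak $ m)"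
    by (simp add: UU_def sum_distrib_left sum_distrib_right mult_ac)
  finally show ?thesis .
qed

lemma qB: "qf th (hadamard (mconj (colm al) ** transpose (colm ak))
                    (transpose (Gk ** colm x ** herm (colm x) ** herm Gl)))
   = cnj (SS th Gl al x) * SS th Gk ak x"
proof -
  have e1: "Gk ** colm x = colm (Gk *v x)"
    by (simp add: matrix_matrix_mult_def matrix_vector_mult_def colm_def vec_eq_iff)
  have e2: "colm v ** herm (colm w) ** herm Gl = (\<chi> i j. v$i * cnj ((Gl *v w)$j))" for v w
    unfolding colm_outerH by (simp add: matrix_matrix_mult_def matrix_vector_mult_def herm_def mconj_def
       transpose_def vec_eq_iff sum_distrib_left mult_ac)
  have s: "SS th G a x = (\<Sum>n\<in>UNIV. th$n * a$n * (G *v x)$n)" for G a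
    apply (simp add: SS_def UU_def matrix_vector_mult_def sum_distrib_left sum_distrib_right)
    apply (subst sum.swap) apply (simp add: mult_ac)
    done
  show ?thesis
    unfolding e1 e2 s
    by (simp add: qf_def hadamard_def mconj_def colm_def transpose_def matrix_matrix_mult_def
          sum_distrib_left sum_distrib_right mult_ac)
qed

lemma y_eq: "vecm (smat alpha ((\<chi> r c. s * u $ r) :: complex^'l^'m)) = (\<chi> p. alpha * s * u $ snd p)"
  by (simp add: vecm_def smat_def vec_eq_iff mult_ac)

lemma sum_snd: "(\<Sum>p\<in>(UNIV::('l::finite \<times> 'm::finite) set). f (snd p)) = real CARD('l) * (\<Sum>m\<in>UNIV. f m)"
proof -
  have "(\<Sum>p\<in>(UNIV::('l \<times> 'm) set). f (snd p)) = (\<Sum>c\<in>(UNIV::'l set). \<Sum>m\<in>UNIV. f m)"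
    unfolding sum.cartesian_product UNIV_Times_UNIV by (simp add: case_prod_beta)
  then show ?thesis by simp
qed

lemma norm_part:
  fixes ui uj :: "complex^'m"
  shows "(norm ((\<chi> p::('l::finite \<times> 'm). ai * si * ui $ snd p) - (\<chi> p. aj * sj * uj $ snd p)))\<^sup>2
     = real CARD('l) * (\<Sum>m\<in>UNIV. (cmod (ai * si * ui$m - aj * sj * uj$m))\<^sup>2)"
proof -
  have "(norm ((\<chi> p::('l \<times> 'm). ai * si * ui $ snd p) - (\<chi> p. aj * sj * uj $ snd p)))\<^sup>2
     = (\<Sum>p\<in>(UNIV::('l \<times> 'm) set). (cmod (ai * si * ui$(snd p) - aj * sj * uj$(snd p)))\<^sup>2)"
    unfolding norm_vec_def L2_set_def
    by (subst real_sqrt_pow2) (auto intro: sum_nonneg)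
  also have "\<dots> = real CARD('l) * (\<Sum>m\<in>UNIV. (cmod (ai * si * ui$m - aj * sj * uj$m))\<^sup>2)"
    by (rule sum_snd)
  finally show ?thesis .
qed

lemma alg_part:
  fixes ui uj :: "complex^'m"
  shows "complex_of_real (\<Sum>m\<in>UNIV. (cmod (ai * si * ui$m - aj * sj * uj$m))\<^sup>2)
   = complex_of_real ((cmod ai)\<^sup>2) * ((\<Sum>m\<in>UNIV. cnj (ui$m) * ui$m) * (cnj si * si))
     - complex_of_real (2 * Re (ai * cnj aj * ((\<Sum>m\<in>UNIV. cnj (uj$m) * ui$m) * (cnj sj * si))))
     + complex_of_real ((cmod aj)\<^sup>2) * ((\<Sum>m\<in>UNIV. cnj (uj$m) * uj$m) * (cnj sj * sj))"
proof -
  let ?w = "ai * cnj aj * ((\<Sum>m\<in>UNIV. cnj (uj$m) * ui$m) * (cnj sj * si))"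
  have e1: "complex_of_real (2 * Re ?w) = ?w + cnj ?w" by (simp only: complex_add_cnj)
  have e2: "complex_of_real (\<Sum>m\<in>UNIV. (cmod (ai * si * ui$m - aj * sj * uj$m))\<^sup>2)
     = (\<Sum>m\<in>UNIV. (ai * si * ui$m - aj * sj * uj$m) * cnj (ai * si * ui$m - aj * sj * uj$m))"
    by (simp only: of_real_sum complex_norm_square)
  have e3: "complex_of_real ((cmod z)\<^sup>2) = z * cnj z" for z by (rule complex_norm_square)
  have e4: "ai * cnj ai * ((\<Sum>m\<in>UNIV. cnj (ui$m) * ui$m) * (cnj si * si)) - (?w + cnj ?w)
     + aj * cnj aj * ((\<Sum>m\<in>UNIV. cnj (uj$m) * uj$m) * (cnj sj * sj))
     = (\<Sum>m\<in>UNIV. ai * cnj ai * (cnj (ui$m) * ui$m) * (cnj si * si)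
          - (ai * cnj aj * (cnj (uj$m) * ui$m) * (cnj sj * si) + cnj ai * aj * (uj$m * cnj (ui$m)) * (sj * cnj si))
          + aj * cnj aj * (cnj (uj$m) * uj$m) * (cnj sj * sj))"
    by (simp add: sum.distrib sum_subtractf sum_distrib_left sum_distrib_right mult.assoc)
  show ?thesis
    unfolding e1 e2 e3 e4
    by (rule sum.cong) (simp_all add: algebra_simps)
qed

theorem proposition3:
  fixes sigma2 :: real
    and alpha_i alpha_j :: complex
    and G_i G_j :: "complex^'m^'n"
    and a_i a_j theta :: "complex^'n"
    and x :: "complex^'m"
    and X :: "complex^'l^'m"
  assumes "sigma2 > 0"
    and "\<forall>n. cmod (theta$n) = 1"
    and "X = (\<chi> r c. x$r)"
  shows
    "let Th = diagm theta;
         y = (\<lambda>alpha G a. vecm (smat alpha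
               (transpose G ** Th ** colm a ** transpose (colm a) ** Th ** G ** X)));
         d = (1 / sigma2) * (norm (y alpha_i G_i a_i - y alpha_j G_j a_j))\<^sup>2;
         Q = colm theta ** herm (colm theta);
         A = (\<lambda>Gk Gl ak al. hadamard (mconj Gl ** transpose Gk)
                                       (transpose (colm ak ** herm (colm al))));
         B = (\<lambda>Gk Gl ak al. hadamard (mconj (colm al) ** transpose (colm ak))
                                       (transpose (Gk ** colm x ** herm (colm x) ** herm Gl)));
         phi = complex_of_real (real CARD('l) / sigma2) *
               (complex_of_real ((cmod alpha_i)\<^sup>2) * trace (herm Q ** A G_i G_i a_i a_i ** Q ** B G_i G_i a_i a_i)
                - complex_of_real (2 * Re (alpha_i * cnj alpha_j * trace (herm Q ** A G_i G_j a_i a_j ** Q ** B G_i G_j a_i a_j)))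
                + complex_of_real ((cmod alpha_j)\<^sup>2) * trace (herm Q ** A G_j G_j a_j a_j ** Q ** B G_j G_j a_j a_j))
     in complex_of_real d = phi"
proof -
  have y: "vecm (smat alpha (transpose G ** diagm theta ** colm a ** transpose (colm a) ** diagm theta ** G ** X))
     = (\<chi> p. alpha * SS theta G a x * UU theta G a $ snd p)" for alpha G a
    unfolding Y_eq[OF assms(3)] y_eq ..
  show ?thesis
    unfolding Let_def y trace_lemma qA qB norm_part alg_part[symmetric]
    by simp
qed

end
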